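(* Let $\mathsf{L}\in\{\mathsf{InqL},\mathbf{PT}\}$ and let $X$ be a nonempty team on a finite set $\{p_1,\dots,p_n\}$ of propositional variables. Then the formula $\Theta_X=\neg\neg\bigvee_{v\in X}(p_1^{v(p_1)}\wedge\dots\wedge p_n^{v(p_n)})$ is $\mathcal{F}$-projective in $\mathsf{L}$, where $\mathcal{F}$ is the class of all flat substitutions of $\mathsf{L}$.
   Context: Here $p^1:=p$, $p^0:=\neg p$, and a team on $V$ is a set of functions $V\to\{0,1\}$. A valuation is a function $v:\mathrm{Prop}\to\{0,1\}$ on the set Prop of propositional variables; a team is a set of valuations. Formulas of $\mathbf{PT}$: $\phi::=p\mid\bot\mid\top\mid\,=\!(\phi_1,\dots,\phi_n,\phi)\mid\neg\phi\mid\phi\wedge\phi\mid\phi\otimes\phi\mid\phi\vee\phi\mid\phi\to\phi$; formulas of $\mathsf{InqL}$ are built from $p,\bot,\top$ by $\wedge,\vee,\to$, with $\neg\phi:=\phi\to\bot$. Satisfaction on a team $X$: $X\models p$ iff $v(p)=1$ for all $v\in X$; $X\models\bot$ iff $X=\emptyset$; $X\models\top$ always; $\wedge$ conjunction; $X\models\phi\otimes\psi$ iff $X=Y\cup Z$ with $Y\models\phi$, $Z\models\psi$; $X\models\phi\vee\psi$ iff $X\models\phi$ or $X\models\psi$; $X\models\phi\to\psi$ iff every $Y\subseteq X$ with $Y\models\phi$ satisfies $\psi$; $X\models\neg\phi$ iff $\{v\}\not\models\phi$ for all $v\in X$; $X\models\,=\!(\phi_1,\dots,\phi_n,\psi)$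 iff $X\models\bigwedge_i(\phi_i\vee(\phi_i\to\bot))\to(\psi\vee(\psi\to\bot))$. For finite $\Gamma$, $\Gamma\vdash_{\mathsf L}\phi$ iff all formulas are in the language of $\mathsf L$ and every team satisfying all of $\Gamma$ satisfies $\phi$. $\phi$ is flat if for all teams $X$: $X\models\phi$ iff $\{v\}\models\phi$ for all $v\in X$. A substitution of $\mathsf L$ is a map on $\mathsf L$-formulas commuting with all connectives and atoms; it is flat if each $\sigma(p)$ is flat. For a set $\mathcal S$ of substitutions, a formula $\phi$ is $\mathcal S$-projective in $\mathsf L$ if there is $\sigma\in\mathcal S$ with $\vdash_{\mathsf L}\sigma(\phi)$, and $\phi,\sigma(p)\vdash_{\mathsf L}p$ and $\phi,p\vdash_{\mathsf L}\sigma(p)$ for all propositional variables $p$. *)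

theory Defs
  imports Main
begin

text \<open>Propositional variables are natural numbers; a valuation is a map
  nat \<Rightarrow> bool (True = 1, False = 0); a team is a set of valuations.\<close>

type_synonym valuation = "nat \<Rightarrow> bool"
type_synonym team = "valuation set"

datatype form =
    Atom nat
  | Bot
  | Top
  | Dep "form list" form
  | Neg form
  | Conj form form
  | Tensor form form
  | Disj form form
  | Imp form form

datatype logic = InqL | PT

text \<open>Team semantics. The dependence atom is given by the clause
  X |= =(phi_1..phi_n,psi) iff X |= /\_i (phi_i v (phi_i -> bot)) -> (psi v (psi -> bot)),
  unfolded directly (empty conjunction = top).\<close>

fun sat :: "team \<Rightarrow> form \<Rightarrow> bool" where
  "sat X (Atom p) = (\<forall>v\<in>X. v p)"
| "sat X Bot = (X = {})"
| "sat X Top = True"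
| "sat X (Dep fs g) =
     (\<forall>Y. Y \<subseteq> X \<longrightarrow>
        (\<forall>f\<in>set fs. sat Y f \<or> (\<forall>Z. Z \<subseteq> Y \<longrightarrow> sat Z f \<longrightarrow> Z = {})) \<longrightarrow>
        (sat Y g \<or> (\<forall>Z. Z \<subseteq> Y \<longrightarrow> sat Z g \<longrightarrow> Z = {})))"
| "sat X (Neg f) = (\<forall>v\<in>X. \<not> sat {v} f)"
| "sat X (Conj f g) = (sat X f \<and> sat X g)"
| "sat X (Tensor f g) = (\<exists>Y Z. X = Y \<union> Z \<and> sat Y f \<and> sat Z g)"
| "sat X (Disj f g) = (sat X f \<or> sat X g)"
| "sat X (Imp f g) = (\<forall>Y. Y \<subseteq> X \<longrightarrow> sat Y f \<longrightarrow> sat Y g)"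

fun in_lang :: "logic \<Rightarrow> form \<Rightarrow> bool" where
  "in_lang L (Atom p) = True"
| "in_lang L Bot = True"
| "in_lang L Top = True"
| "in_lang L (Dep fs g) = (L = PT \<and> (\<forall>f\<in>set fs. in_lang L f) \<and> in_lang L g)"
| "in_lang L (Neg f) = (L = PT \<and> in_lang L f)"
| "in_lang L (Conj f g) = (in_lang L f \<and> in_lang L g)"
| "in_lang L (Tensor f g) = (L = PT \<and> in_lang L f \<and> in_lang L g)"
| "in_lang L (Disj f g) = (in_lang L f \<and> in_lang L g)"
| "in_lang L (Imp f g) = (in_lang L f \<and> in_lang L g)"

definition neg :: "logic \<Rightarrow> form \<Rightarrow> form" where
  "neg L f = (if L = InqL then Imp f Bot else Neg f)"

definition entails :: "logic \<Rightarrow> form list \<Rightarrow> form \<Rightarrow> bool" where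
  "entails L \<Gamma> f \<longleftrightarrow>
     (\<forall>g\<in>set \<Gamma>. in_lang L g) \<and> in_lang L f \<and>
     (\<forall>X::team. (\<forall>g\<in>set \<Gamma>. sat X g) \<longrightarrow> sat X f)"

definition flat :: "form \<Rightarrow> bool" where
  "flat f \<longleftrightarrow> (\<forall>X. sat X f = (\<forall>v\<in>X. sat {v} f))"

fun subst :: "(nat \<Rightarrow> form) \<Rightarrow> form \<Rightarrow> form" where
  "subst s (Atom p) = s p"
| "subst s Bot = Bot"
| "subst s Top = Top"
| "subst s (Dep fs g) = Dep (map (subst s) fs) (subst s g)"
| "subst s (Neg f) = Neg (subst s f)"
| "subst s (Conj f g) = Conj (subst s f) (subst s g)"
| "subst s (Tensor f g) = Tensor (subst s f) (subst s g)"
| "subst s (Disj f g) = Disj (subst s f) (subst s g)"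
| "subst s (Imp f g) = Imp (subst s f) (subst s g)"

definition flat_subst :: "logic \<Rightarrow> (nat \<Rightarrow> form) \<Rightarrow> bool" where
  "flat_subst L s \<longleftrightarrow> (\<forall>p. in_lang L (s p) \<and> flat (s p))"

definition projective :: "logic \<Rightarrow> ((nat \<Rightarrow> form) \<Rightarrow> bool) \<Rightarrow> form \<Rightarrow> bool" where
  "projective L S f \<longleftrightarrow>
     (\<exists>s. S s \<and> entails L [] (subst s f) \<and>
          (\<forall>p. entails L [f, s p] (Atom p) \<and> entails L [f, Atom p] (s p)))"

text \<open>p^1 = p, p^0 = neg p.\<close>

definition lit :: "logic \<Rightarrow> nat \<Rightarrow> bool \<Rightarrow> form" where
  "lit L p b = (if b then Atom p else neg L (Atom p))"

definition big_conj :: "form list \<Rightarrow> form" where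
  "big_conj fs = foldr Conj fs Top"

definition big_disj :: "form list \<Rightarrow> form" where
  "big_disj fs = foldr Disj fs Bot"

text \<open>Theta_X for the team X = set xs (restricted to the variables ps = [p_1..p_n]).\<close>

definition Theta :: "logic \<Rightarrow> nat list \<Rightarrow> valuation list \<Rightarrow> form" where
  "Theta L ps xs =
     neg L (neg L (big_disj (map (\<lambda>v. big_conj (map (\<lambda>p. lit L p (v p)) ps)) xs)))"

end

theory Submission
  imports Defs
begin

lemma sat_neg_single: "sat {v} (neg L f) = (\<not> sat {v} f)"
  unfolding neg_def by (cases L) (auto simp: subset_singleton_iff)

lemma sat_negneg: "sat X (neg L (neg L f)) = (\<forall>v\<in>X. sat {v} f)"
proof (cases L)
  case InqL
  show ?thesis
  proof
    assume h: "sat X (neg L (neg L f))"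
    show "\<forall>v\<in>X. sat {v} f"
    proof
      fix v assume v: "v \<in> X"
      show "sat {v} f"
      proof (rule ccontr)
        assume n: "\<not> sat {v} f"
        have "\<forall>Z. Z \<subseteq> {v} \<longrightarrow> sat Z f \<longrightarrow> Z = {}"
          using n by (auto simp: subset_singleton_iff)
        then show False using h v InqL unfolding neg_def by auto
      qed
    qed
  next
    assume h: "\<forall>v\<in>X. sat {v} f"
    show "sat X (neg L (neg L f))"
      unfolding neg_def using InqL
    proof (simp, intro allI impI)
      fix Y assume "Y \<subseteq> X" "\<forall>Z\<subseteq>Y. sat Z f \<longrightarrow> Z = {}"
      then show "Y = {}" using h by blast
    qed
  qed
next
  case PT
  then show ?thesis unfolding neg_def by auto
qed

lemma sat_big_disj_single: "sat {v} (big_disj fs) = (\<exists>f\<in>set fs. sat {v} f)"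
  unfolding big_disj_def by (induction fs) auto

lemma sat_big_conj: "sat X (big_conj fs) = (\<forall>f\<in>set fs. sat X f)"
  unfolding big_conj_def by (induction fs) auto

lemma subst_neg: "subst s (neg L f) = neg L (subst s f)"
  unfolding neg_def by auto

lemma subst_big_conj: "subst s (big_conj fs) = big_conj (map (subst s) fs)"
  unfolding big_conj_def by (induction fs) auto

lemma subst_big_disj: "subst s (big_disj fs) = big_disj (map (subst s) fs)"
  unfolding big_disj_def by (induction fs) auto

lemma in_lang_neg: "in_lang L (neg L f) = in_lang L f"
  unfolding neg_def by (cases L) auto

lemma in_lang_big_conj: "(\<forall>f\<in>set fs. in_lang L f) \<Longrightarrow> in_lang L (big_conj fs)"
  unfolding big_conj_def by (induction fs) auto

lemma in_lang_big_disj: "(\<forall>f\<in>set fs. in_lang L f) \<Longrightarrow> in_lang L (big_disj fs)"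
  unfolding big_disj_def by (induction fs) auto

lemma sat_lit_single: "sat {v} (lit L p b) = (v p = b)"
  unfolding lit_def by (auto simp: sat_neg_single)

lemma in_lang_lit: "in_lang L (lit L p b)"
  unfolding lit_def by (auto simp: in_lang_neg)

lemma in_lang_Theta: "in_lang L (Theta L ps xs)"
  unfolding Theta_def
  by (auto simp: in_lang_neg in_lang_lit intro!: in_lang_big_disj in_lang_big_conj)

lemma sat_Theta: "sat X (Theta L ps xs) = (\<forall>v\<in>X. \<exists>x\<in>set xs. \<forall>p\<in>set ps. v p = x p)"
  unfolding Theta_def sat_negneg
  by (auto simp: sat_big_disj_single sat_big_conj sat_lit_single)

lemma in_lang_subst: "in_lang L f \<Longrightarrow> (\<forall>p. in_lang L (s p)) \<Longrightarrow> in_lang L (subst s f)"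
  by (induction f) auto

theorem lemma4p3:
  fixes L :: logic and ps :: "nat list" and xs :: "valuation list"
  assumes "distinct ps" and "xs \<noteq> []"
  shows "projective L (flat_subst L) (Theta L ps xs)"
proof -
  define T where "T = Theta L ps xs"
  define x0 where "x0 = hd xs"
  have x0: "x0 \<in> set xs" using assms(2) unfolding x0_def by simp
  define s where "s p = (if x0 p then Imp T (Atom p) else Conj T (Atom p))" for p
  have satT: "sat X T = (\<forall>v\<in>X. sat {v} T)" for X
    unfolding T_def sat_Theta by auto
  have sp1: "sat {v} (s p) = (if x0 p then (sat {v} T \<longrightarrow> v p) else (sat {v} T \<and> v p))" for v p
    unfolding s_def by (auto simp: subset_singleton_iff)
  have flat_s: "flat (s p)" for p
    unfolding flat_def
  proof
    fix X
    show "sat X (s p) = (\<forall>v\<in>X. sat {v} (s p))"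
    proof (cases "x0 p")
      case True
      have "sat X (s p) = (\<forall>Y. Y \<subseteq> X \<longrightarrow> sat Y T \<longrightarrow> (\<forall>v\<in>Y. v p))"
        using True unfolding s_def by simp
      also have "\<dots> = (\<forall>v\<in>X. sat {v} T \<longrightarrow> v p)"
      proof
        assume h: "\<forall>Y. Y \<subseteq> X \<longrightarrow> sat Y T \<longrightarrow> (\<forall>v\<in>Y. v p)"
        show "\<forall>v\<in>X. sat {v} T \<longrightarrow> v p"
        proof (intro ballI impI)
          fix v assume "v \<in> X" "sat {v} T"
          then show "v p" using h[rule_format, of "{v}"] by simp
        qed
      next
        assume h: "\<forall>v\<in>X. sat {v} T \<longrightarrow> v p"
        show "\<forall>Y. Y \<subseteq> X \<longrightarrow> sat Y T \<longrightarrow> (\<forall>v\<in>Y. v p)"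
        proof (intro allI impI ballI)
          fix Y v assume "Y \<subseteq> X" "sat Y T" "v \<in> Y"
          then show "v p" using h satT[of Y] by blast
        qed
      qed
      finally show ?thesis unfolding sp1 using True by simp
    next
      case False
      then show ?thesis unfolding sp1 using satT[of X] unfolding s_def by auto
    qed
  qed
  have lang_s: "in_lang L (s p)" for p
    unfolding s_def T_def using in_lang_Theta by auto
  have sl: "sat {v} (subst s (lit L p b)) = (sat {v} (s p) = b)" for v p b
    unfolding lit_def by (auto simp: subst_neg sat_neg_single)
  have valid: "sat X (subst s T)" for X
  proof -
    have eq: "subst s T = neg L (neg L (big_disj (map (\<lambda>x. big_conj (map (\<lambda>p. subst s (lit L p (x p))) ps)) xs)))"
      unfolding T_def Theta_def subst_neg subst_big_disj by (simp add: o_def subst_big_conj)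
    show ?thesis unfolding eq sat_negneg
    proof (simp add: sat_big_disj_single sat_big_conj sl, intro ballI)
      fix v assume "v \<in> X"
      show "\<exists>x\<in>set xs. \<forall>p\<in>set ps. sat {v} (s p) = x p"
      proof (cases "sat {v} T")
        case True
        then obtain x where x: "x \<in> set xs" "\<forall>p\<in>set ps. v p = x p"
          unfolding T_def sat_Theta by auto
        show ?thesis using x True
          by (intro bexI[of _ x]) (auto simp: sp1)
      next
        case False
        show ?thesis using x0 False
          by (intro bexI[of _ x0]) (auto simp: sp1)
      qed
    qed
  qed
  have "entails L [] (subst s T)"
    unfolding entails_def using valid lang_s in_lang_Theta[of L ps xs] T_def
    by (simp add: in_lang_subst)
  moreover have "entails L [T, s p] (Atom p)" for p
  proof -
    have "sat X (Atom p)" if h: "sat X T" "sat X (s p)" for X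
    proof -
      have "v p" if v: "v \<in> X" for v
      proof -
        have "sat {v} (s p)" using h v flat_s[of p] unfolding flat_def by blast
        moreover have "sat {v} T" using h v satT by blast
        ultimately show "v p" using sp1 by (auto split: if_splits)
      qed
      then show ?thesis by (simp only: sat.simps) blast
    qed
    then show ?thesis unfolding entails_def using lang_s in_lang_Theta[of L ps xs] T_def by auto
  qed
  moreover have "entails L [T, Atom p] (s p)" for p
    unfolding entails_def using lang_s in_lang_Theta[of L ps xs] T_def
    unfolding s_def by auto
  moreover have "flat_subst L s" unfolding flat_subst_def using lang_s flat_s by auto
  ultimately show ?thesis unfolding projective_def T_def by blast
qed

end
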